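(* Let $P$ be a protocol for anonymous transmissions (achieving sender anonymity) among $n$ players in which the only resources available are pairwise shared secret key bits, a reliable broadcast channel and public communication. Then every node of the key-sharing graph $G=(V,E)$ of $P$ has degree at least $2$ (otherwise the anonymity of a player of degree $1$ can be broken by his unique neighbour).
   Context: The key-sharing graph of the protocol is the undirected graph $G=(V,E)$ whose nodes are the players, with an edge between nodes $i$ and $j$ iff $i$ and $j$ share one bit of secret key. Sender anonymity: for an adversary corrupting a set of $t\le n-2$ players not including the sender $s$ and observing all communication $C$ and the randomness $G^t$ of the corrupted players, $\max_S\Pr[S=s\mid G^t,C]=\max_S\Pr[S=s]=1/(n-t)$, maximum over random variables $S$ depending only on $C$ and $G^t$. *)

theory Defs
  imports Complex_Main
begin

text \<open>
Players are 0,...,n-1. The key-sharing graph E is a set of 2-element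
sets {i,j} of players; each edge carries one uniformly random secret key bit,
independently.
A protocol runs R rounds of reliable public broadcast; in every round each
player i broadcasts a value computed (deterministically) from the key bits it
holds, its private input (Some m if it is the sender of message m, None
otherwise) and the public communication so far.
\<close>

definition key_graph :: "nat \<Rightarrow> nat set set \<Rightarrow> bool" where
  "key_graph n E \<longleftrightarrow> E \<subseteq> {e. \<exists>i j. i < n \<and> j < n \<and> i \<noteq> j \<and> e = {i, j}}"

definition key_assignments :: "nat set set \<Rightarrow> (nat set \<Rightarrow> bool) set" where
  "key_assignments E = {\<kappa>. \<forall>e. e \<notin> E \<longrightarrow> \<kappa> e = False}"

definition keys_of :: "nat set set \<Rightarrow> nat set \<Rightarrow> (nat set \<Rightarrow> bool) \<Rightarrow> (nat set \<Rightarrow> bool)" where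
  "keys_of E T \<kappa> = (\<lambda>e. if e \<in> E \<and> e \<inter> T \<noteq> {} then \<kappa> e else False)"

type_synonym ('m, 'b) protocol =
  "nat \<Rightarrow> (nat set \<Rightarrow> bool) \<Rightarrow> 'm option \<Rightarrow> 'b list list \<Rightarrow> 'b"

primrec run :: "nat \<Rightarrow> ('m, 'b) protocol \<Rightarrow> nat set set \<Rightarrow> (nat \<Rightarrow> 'm option)
                 \<Rightarrow> (nat set \<Rightarrow> bool) \<Rightarrow> nat \<Rightarrow> 'b list list" where
  "run n f E inp \<kappa> 0 = []"
| "run n f E inp \<kappa> (Suc r) = run n f E inp \<kappa> r @
      [map (\<lambda>i. f i (keys_of E {i} \<kappa>) (inp i) (run n f E inp \<kappa> r)) [0..<n]]"

definition transcript :: "nat \<Rightarrow> ('m, 'b) protocol \<Rightarrow> nat set set \<Rightarrow> nat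
                           \<Rightarrow> nat \<Rightarrow> 'm \<Rightarrow> (nat set \<Rightarrow> bool) \<Rightarrow> 'b list list" where
  "transcript n f E R s m \<kappa> = run n f E (\<lambda>i. if i = s then Some m else None) \<kappa> R"

definition transmits :: "nat \<Rightarrow> ('m, 'b) protocol \<Rightarrow> nat set set \<Rightarrow> nat \<Rightarrow> bool" where
  "transmits n f E R \<longleftrightarrow>
     (\<exists>dec :: nat \<Rightarrow> (nat set \<Rightarrow> bool) \<Rightarrow> 'b list list \<Rightarrow> 'm.
        \<forall>s<n. \<exists>r<n. r \<noteq> s \<and>
          (\<forall>m. \<forall>\<kappa>\<in>key_assignments E. dec r (keys_of E {r} \<kappa>) (transcript n f E R s m \<kappa>) = m))"

text \<open>Optimal guessing probability max_S Pr[S = s] of an adversary corrupting T,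
who sees the randomness (key bits) of T and the communication C, when the sender
s is uniform over the uncorrupted players and the keys are uniform:
  sum over views v of max over x of Pr[s = x, view = v].\<close>
definition guess_prob :: "nat \<Rightarrow> ('m, 'b) protocol \<Rightarrow> nat set set \<Rightarrow> nat
                          \<Rightarrow> nat set \<Rightarrow> 'm \<Rightarrow> real" where
  "guess_prob n f E R T m =
    (let H = {0..<n} - T; K = key_assignments E;
         view = (\<lambda>x \<kappa>. (keys_of E T \<kappa>, transcript n f E R x m \<kappa>))
     in (\<Sum>v \<in> (\<lambda>(x, \<kappa>). view x \<kappa>) ` (H \<times> K).
           Max ((\<lambda>x. real (card {\<kappa> \<in> K. view x \<kappa> = v}) / (real (card H) * real (card K))) ` H)))"

definition sender_anonymous :: "nat \<Rightarrow> ('m, 'b) protocol \<Rightarrow> nat set set \<Rightarrow> nat \<Rightarrow> bool" where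
  "sender_anonymous n f E R \<longleftrightarrow>
     (\<forall>T m. T \<subseteq> {0..<n} \<and> card T \<le> n - 2 \<longrightarrow> guess_prob n f E R T m = 1 / real (n - card T))"

definition degree :: "nat set set \<Rightarrow> nat \<Rightarrow> nat" where
  "degree E i = card {j. {i, j} \<in> E}"

end

theory Submission imports Defs begin

lemma length_run: "length (run n f E inp \<kappa> r) = r"
  by (induction r) auto

lemma run_append: "\<exists>xs. run n f E inp \<kappa> (r + d) = run n f E inp \<kappa> r @ xs"
  by (induction d) auto

lemma run_prefix_eq:
  assumes "r \<le> R" "run n f E inp1 \<kappa> R = run n f E inp2 \<kappa> R"
  shows "run n f E inp1 \<kappa> r = run n f E inp2 \<kappa> r"
proof -
  obtain d where d: "R = r + d" using assms(1) le_Suc_ex by blast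
  obtain a where a: "run n f E inp1 \<kappa> R = run n f E inp1 \<kappa> r @ a" using run_append d by blast
  obtain b where b: "run n f E inp2 \<kappa> R = run n f E inp2 \<kappa> r @ b" using run_append d by blast
  show ?thesis using assms(2) a b length_run
    by (metis append_eq_append_conv)
qed

lemma run_none:
  assumes i: "i < n" and ji: "j \<noteq> i"
    and eq: "run n f E (\<lambda>p. if p = i then Some m else None) \<kappa> R = run n f E (\<lambda>p. if p = j then Some m else None) \<kappa> R"
  shows "run n f E (\<lambda>p. if p = i then Some m else None) \<kappa> R = run n f E (\<lambda>_. None) \<kappa> R"
proof -
  let ?I = "\<lambda>p. if p = i then Some m else None"
  let ?J = "\<lambda>p. if p = j then Some m else None"
  have "r \<le> R \<Longrightarrow> run n f E ?I \<kappa> r = run n f E (\<lambda>_. None) \<kappa> r" for r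
  proof (induction r)
    case 0 then show ?case by simp
  next
    case (Suc r)
    have IH: "run n f E ?I \<kappa> r = run n f E (\<lambda>_. None) \<kappa> r" using Suc by simp
    have e1: "run n f E ?I \<kappa> r = run n f E ?J \<kappa> r" using Suc.prems by (intro run_prefix_eq[OF _ eq]) simp
    have e2: "run n f E ?I \<kappa> (Suc r) = run n f E ?J \<kappa> (Suc r)" by (rule run_prefix_eq[OF Suc.prems eq])
    then have "map (\<lambda>p. f p (keys_of E {p} \<kappa>) (?I p) (run n f E ?I \<kappa> r)) [0..<n]
             = map (\<lambda>p. f p (keys_of E {p} \<kappa>) (?J p) (run n f E ?J \<kappa> r)) [0..<n]"
      unfolding run.simps append1_eq_conv by (rule conjunct2)
    then have "map (\<lambda>p. f p (keys_of E {p} \<kappa>) (?I p) (run n f E ?I \<kappa> r)) [0..<n] ! i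
             = map (\<lambda>p. f p (keys_of E {p} \<kappa>) (?J p) (run n f E ?J \<kappa> r)) [0..<n] ! i"
      by (rule arg_cong)
    then have ki: "f i (keys_of E {i} \<kappa>) (Some m) (run n f E ?I \<kappa> r) = f i (keys_of E {i} \<kappa>) None (run n f E ?I \<kappa> r)"
      using i ji e1 by simp
    have "map (\<lambda>p. f p (keys_of E {p} \<kappa>) (?I p) (run n f E ?I \<kappa> r)) [0..<n]
        = map (\<lambda>p. f p (keys_of E {p} \<kappa>) None (run n f E (\<lambda>_. None) \<kappa> r)) [0..<n]"
      using ki IH by (intro map_cong) auto
    then show ?case using IH by simp
  qed
  then show ?thesis by simp
qed

lemma finite_E: "key_graph n E \<Longrightarrow> finite E"
  unfolding key_graph_def
  by (rule finite_subset[of _ "Pow {0..<n}"]) auto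

lemma finite_K: assumes "finite E" shows "finite (key_assignments E)"
proof -
  have "inj_on (\<lambda>\<kappa>. {e. \<kappa> e}) (key_assignments E)"
    unfolding key_assignments_def inj_on_def
  proof (intro ballI impI)
    fix x y :: "nat set \<Rightarrow> bool" assume "{e. x e} = {e. y e}"
    then show "x = y" by (metis Collect_inj)
  qed
  moreover have "(\<lambda>\<kappa>. {e. \<kappa> e}) ` key_assignments E \<subseteq> Pow E"
    unfolding key_assignments_def by auto
  ultimately show ?thesis using assms finite_imageD finite_subset by (metis Pow_iff finite_Pow_iff)
qed

lemma anon_eq:
  assumes kg: "key_graph n E" and ij: "i < n" "j < n" "i \<noteq> j" and nE: "{i, j} \<notin> E"
    and gp: "guess_prob n f E R ({0..<n} - {i, j}) m = 1 / 2"
    and k0: "\<kappa>0 \<in> key_assignments E"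
  shows "transcript n f E R i m \<kappa>0 = transcript n f E R j m \<kappa>0"
proof (rule ccontr)
  assume ne: "transcript n f E R i m \<kappa>0 \<noteq> transcript n f E R j m \<kappa>0"
  define T where "T = {0..<n} - {i, j}"
  define H where "H = {0..<n} - T"
  define K where "K = key_assignments E"
  define view where "view = (\<lambda>x \<kappa>. (keys_of E T \<kappa>, transcript n f E R x m \<kappa>))"
  define V where "V = (\<lambda>(x, \<kappa>). view x \<kappa>) ` (H \<times> K)"
  define g where "g = (\<lambda>v x. real (card {\<kappa> \<in> K. view x \<kappa> = v}) / (real (card H) * real (card K)))"
  have H: "H = {i, j}" unfolding H_def T_def using ij by auto
  have cH: "card H = 2" using H ij by simp
  have gpe: "guess_prob n f E R T m = (\<Sum>v\<in>V. Max (g v ` H))"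
    unfolding guess_prob_def Let_def H_def K_def view_def V_def g_def by simp
  have keys: "keys_of E T \<kappa> = \<kappa>" if "\<kappa> \<in> K" for \<kappa>
  proof
    fix e
    show "keys_of E T \<kappa> e = \<kappa> e"
    proof (cases "e \<in> E")
      case True
      then obtain a b where ab: "a < n" "b < n" "a \<noteq> b" "e = {a, b}"
        using kg unfolding key_graph_def by blast
      have "e \<inter> T \<noteq> {}"
      proof
        assume "e \<inter> T = {}"
        then have "a \<in> {i, j}" "b \<in> {i, j}" using ab unfolding T_def by auto
        then have "e = {i, j}" using ab by auto
        then show False using True nE by simp
      qed
      then show ?thesis using True unfolding keys_of_def by simp
    next
      case False
      then show ?thesis using that unfolding keys_of_def K_def key_assignments_def by simp
    qed
  qed
  have fK: "finite K" unfolding K_def using finite_K finite_E kg by blast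
  have k0K: "\<kappa>0 \<in> K" using k0 K_def by simp
  have cK: "card K > 0" using fK k0K card_gt_0_iff by blast
  have fV: "finite V" unfolding V_def using fK H by simp
  define c where "c = 1 / (2 * real (card K))"
  have lowb: "c \<le> Max (g v ` H)" if vV: "v \<in> V" for v
  proof -
    obtain x \<kappa> where x: "x \<in> H" "\<kappa> \<in> K" "v = view x \<kappa>" using vV unfolding V_def by fast
    have "finite {\<kappa> \<in> K. view x \<kappa> = v}" using fK by simp
    moreover have "\<kappa> \<in> {\<kappa> \<in> K. view x \<kappa> = v}" using x by simp
    ultimately have "card {\<kappa> \<in> K. view x \<kappa> = v} \<ge> 1"
      by (metis One_nat_def Suc_leI card_gt_0_iff empty_iff)
    then have "c \<le> g v x" unfolding g_def c_def cH using cK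
      by (simp add: divide_right_mono)
    also have "g v x \<le> Max (g v ` H)" using x H by (intro Max_ge) auto
    finally show ?thesis .
  qed
  have injv: "inj_on (view i) K" unfolding inj_on_def view_def using keys by auto
  have notin: "view j \<kappa>0 \<notin> view i ` K"
  proof
    assume "view j \<kappa>0 \<in> view i ` K"
    then obtain \<kappa> where "\<kappa> \<in> K" "view j \<kappa>0 = view i \<kappa>" by auto
    then show False using keys k0K ne unfolding view_def by auto
  qed
  have sub: "insert (view j \<kappa>0) (view i ` K) \<subseteq> V" unfolding V_def H using k0K by force
  have "card (insert (view j \<kappa>0) (view i ` K)) = card K + 1"
    using notin injv fK by (simp add: card_image)
  then have cV: "card K + 1 \<le> card V" using card_mono[OF fV sub] by simp
  have "real (card V) * c \<le> (\<Sum>v\<in>V. Max (g v ` H))"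
    using lowb sum_bounded_below[of V c "\<lambda>v. Max (g v ` H)"] by simp
  moreover have "real (card K + 1) * c \<le> real (card V) * c"
    using cV c_def by (intro mult_right_mono) auto
  moreover have "real (card K + 1) * c > 1 / 2" unfolding c_def using cK
    by (simp add: field_simps)
  ultimately have "guess_prob n f E R T m > 1 / 2" using gpe by linarith
  then show False using gp T_def by simp
qed

theorem mainTheorem3:
  fixes n :: nat and E :: "nat set set" and R :: nat
    and f :: "('m, 'b) protocol"
  assumes "3 \<le> n"
    and "\<exists>m1 m2 :: 'm. m1 \<noteq> m2"
    and "key_graph n E"
    and "transmits n f E R"
    and "sender_anonymous n f E R"
  shows "\<forall>i<n. 2 \<le> degree E i"
proof (intro allI impI)
  fix i assume i: "i < n"
  show "2 \<le> degree E i"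
  proof (rule ccontr)
    assume "\<not> 2 \<le> degree E i"
    then have dg: "card {j. {i, j} \<in> E} \<le> 1" unfolding degree_def by simp
    have Nsub: "{j. {i, j} \<in> E} \<subseteq> {0..<n}"
    proof
      fix j assume "j \<in> {j. {i, j} \<in> E}"
      then obtain a b where "a < n" "b < n" "{i, j} = {a, b}"
        using assms(3) unfolding key_graph_def by blast
      then show "j \<in> {0..<n}" by (auto simp: doubleton_eq_iff)
    qed
    have fN: "finite {j. {i, j} \<in> E}" using Nsub finite_subset by blast
    have "\<not> ({0..<n} - {i} \<subseteq> {j. {i, j} \<in> E})"
    proof
      assume "{0..<n} - {i} \<subseteq> {j. {i, j} \<in> E}"
      then have "card ({0..<n} - {i}) \<le> 1" using card_mono[OF fN] dg le_trans by blast
      then show False using i assms(1) by simp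
    qed
    then obtain j where j: "j < n" "j \<noteq> i" "{i, j} \<notin> E" by (auto simp: subset_iff)
    have eqm: "transcript n f E R i m \<kappa> = run n f E (\<lambda>_. None) \<kappa> R"
      if k: "\<kappa> \<in> key_assignments E" for m \<kappa>
    proof -
      have cT: "card ({0..<n} - {i, j}) = n - 2" using i j by (simp add: card_Diff_subset)
      have "guess_prob n f E R ({0..<n} - {i, j}) m = 1 / real (n - card ({0..<n} - {i, j}))"
        using assms(5) cT unfolding sender_anonymous_def by (metis Diff_subset order_refl)
      also have "\<dots> = 1 / 2" using cT assms(1) by simp
      finally have gp: "guess_prob n f E R ({0..<n} - {i, j}) m = 1 / 2" .
      have "transcript n f E R i m \<kappa> = transcript n f E R j m \<kappa>"
        using anon_eq[OF assms(3) i j(1) j(2)[symmetric] j(3) gp k] .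
      then show ?thesis unfolding transcript_def using run_none[OF i j(2)] by metis
    qed
    obtain dec :: "nat \<Rightarrow> (nat set \<Rightarrow> bool) \<Rightarrow> 'b list list \<Rightarrow> 'm" where
      dec: "\<forall>s<n. \<exists>r<n. r \<noteq> s \<and>
          (\<forall>m. \<forall>\<kappa>\<in>key_assignments E. dec r (keys_of E {r} \<kappa>) (transcript n f E R s m \<kappa>) = m)"
      using assms(4) unfolding transmits_def by blast
    then obtain r where r: "\<forall>m. \<forall>\<kappa>\<in>key_assignments E. dec r (keys_of E {r} \<kappa>) (transcript n f E R i m \<kappa>) = m"
      using i by blast
    have k0: "(\<lambda>_. False) \<in> key_assignments E" unfolding key_assignments_def by simp
    obtain m1 m2 :: 'm where "m1 \<noteq> m2" using assms(2) by blast
    moreover have "m1 = m2" proof -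
      have "m1 = dec r (keys_of E {r} (\<lambda>_. False)) (run n f E (\<lambda>_. None) (\<lambda>_. False) R)"
        using r k0 eqm[OF k0, of m1] by metis
      moreover have "m2 = dec r (keys_of E {r} (\<lambda>_. False)) (run n f E (\<lambda>_. None) (\<lambda>_. False) R)"
        using r k0 eqm[OF k0, of m2] by metis
      ultimately show ?thesis by simp
    qed
    ultimately show False by simp
  qed
qed

end
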